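(* Let $G$ act simplicially on a connected simplicial complex $X$, and let $Z\subseteq X$ be a connected essential $G$-c.s. If the homomorphism $\pi_1Z\to\pi_1X$ induced by inclusion is not injective, then $Z$ is contained in a thick $G$-c.s.
   Context: A $G$-c.s.\ is a $G$-invariant subcomplex $Z\subseteq X$ with $Z/G$ compact (not required to be connected). For a subcomplex $Y$ of dimension at most $2$, the degree of an edge is the number of triangles of $Y$ containing it. $Y$ is essential if every edge has degree at least $2$ in $Y$ and no connected component of $Y$ is a single vertex; an essential $Y$ is thick if some edge has degree at least $3$ in $Y$. *)

theory Defs
  imports "HOL-Algebra.Group_Action" "HOL-Library.Extended_Nat"
begin

definition simplicial_complex :: "'v set set \<Rightarrow> bool" where
  "simplicial_complex K \<longleftrightarrow>
     (\<forall>\<sigma>\<in>K. finite \<sigma> \<and> \<sigma> \<noteq> {}) \<and>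
     (\<forall>\<sigma>\<in>K. \<forall>\<tau>. \<tau> \<subseteq> \<sigma> \<and> \<tau> \<noteq> {} \<longrightarrow> \<tau> \<in> K)"

definition vertices :: "'v set set \<Rightarrow> 'v set" where
  "vertices K = \<Union>K"

definition subcomplex :: "'v set set \<Rightarrow> 'v set set \<Rightarrow> bool" where
  "subcomplex Y X \<longleftrightarrow> Y \<subseteq> X \<and> simplicial_complex Y"

definition sc_connected :: "'v set set \<Rightarrow> bool" where
  "sc_connected K \<longleftrightarrow> K \<noteq> {} \<and>
     (\<forall>u\<in>vertices K. \<forall>w\<in>vertices K. (u, w) \<in> {(a, b). {a, b} \<in> K}\<^sup>*)"

definition simplicial_action :: "('g, 'm) monoid_scheme \<Rightarrow> ('g \<Rightarrow> 'v \<Rightarrow> 'v) \<Rightarrow> 'v set set \<Rightarrow> bool" where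
  "simplicial_action G \<phi> X \<longleftrightarrow> group_action G (vertices X) \<phi> \<and>
     (\<forall>g\<in>carrier G. \<forall>\<sigma>\<in>X. \<phi> g ` \<sigma> \<in> X)"

(* G-c.s.: G-invariant subcomplex with compact quotient, i.e. finitely many
   G-orbits of simplices *)
definition G_cs :: "('g, 'm) monoid_scheme \<Rightarrow> ('g \<Rightarrow> 'v \<Rightarrow> 'v) \<Rightarrow> 'v set set \<Rightarrow> 'v set set \<Rightarrow> bool" where
  "G_cs G \<phi> X Z \<longleftrightarrow> subcomplex Z X \<and>
     (\<forall>g\<in>carrier G. \<forall>\<sigma>\<in>Z. \<phi> g ` \<sigma> \<in> Z) \<and>
     finite {{\<phi> g ` \<sigma> | g. g \<in> carrier G} | \<sigma>. \<sigma> \<in> Z}"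

definition edges :: "'v set set \<Rightarrow> 'v set set" where
  "edges Y = {e \<in> Y. card e = 2}"

definition triangles_at :: "'v set set \<Rightarrow> 'v set \<Rightarrow> 'v set set" where
  "triangles_at Y e = {t \<in> Y. card t = 3 \<and> e \<subseteq> t}"

definition degree :: "'v set set \<Rightarrow> 'v set \<Rightarrow> enat" where
  "degree Y e = (if finite (triangles_at Y e) then enat (card (triangles_at Y e)) else \<infinity>)"

definition dim_le2 :: "'v set set \<Rightarrow> bool" where
  "dim_le2 Y \<longleftrightarrow> (\<forall>\<sigma>\<in>Y. card \<sigma> \<le> 3)"

(* essential: every edge of degree \<ge> 2, no component is a single vertex
   (i.e. every vertex lies on an edge) *)
definition essential :: "'v set set \<Rightarrow> bool" where
  "essential Y \<longleftrightarrow> dim_le2 Y \<and>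
     (\<forall>e\<in>edges Y. degree Y e \<ge> 2) \<and>
     (\<forall>v\<in>vertices Y. \<exists>e\<in>edges Y. v \<in> e)"

definition thick :: "'v set set \<Rightarrow> bool" where
  "thick Y \<longleftrightarrow> essential Y \<and> (\<exists>e\<in>edges Y. degree Y e \<ge> 3)"

(* Edge-path groupoid (combinatorial model of the fundamental groupoid) *)
definition edge_path :: "'v set set \<Rightarrow> 'v list \<Rightarrow> bool" where
  "edge_path K p \<longleftrightarrow> p \<noteq> [] \<and> (\<forall>i. Suc i < length p \<longrightarrow> {p ! i, p ! Suc i} \<in> K)"

definition elem_move :: "'v set set \<Rightarrow> ('v list \<times> 'v list) set" where
  "elem_move K =
     {(xs @ [u, v, w] @ ys, xs @ [u, w] @ ys) | xs u v w ys. {u, v, w} \<in> K} \<union>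
     {(xs @ [u, u] @ ys, xs @ [u] @ ys) | xs u ys. {u} \<in> K}"

definition edge_equiv :: "'v set set \<Rightarrow> 'v list \<Rightarrow> 'v list \<Rightarrow> bool" where
  "edge_equiv K p q \<longleftrightarrow> (p, q) \<in> (elem_move K \<union> (elem_move K)\<inverse>)\<^sup>*"

definition pi1_injective :: "'v set set \<Rightarrow> 'v set set \<Rightarrow> bool" where
  "pi1_injective Z X \<longleftrightarrow>
     (\<forall>p. edge_path Z p \<and> hd p = last p \<and> edge_equiv X p [hd p] \<longrightarrow> edge_equiv Z p [hd p])"

end

theory Submission
  imports Defs
begin


lemma ee_refl[simp]: "edge_equiv K p p"
  by (simp add: edge_equiv_def)

lemma ee_sym: "edge_equiv K p q \<Longrightarrow> edge_equiv K q p"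
  unfolding edge_equiv_def
  by (metis converse_Un converse_converse rtrancl_converseI sup_commute)

lemma ee_trans[trans]: "edge_equiv K p q \<Longrightarrow> edge_equiv K q r \<Longrightarrow> edge_equiv K p r"
  unfolding edge_equiv_def by (meson rtrancl_trans)

lemma em_ctx: "(a, b) \<in> elem_move K \<Longrightarrow> (c @ a @ d, c @ b @ d) \<in> elem_move K"
  unfolding elem_move_def
proof (elim UnE CollectE exE conjE, goal_cases)
  case (1 xs u v w ys)
  then show ?case apply (intro UnI1 CollectI)
    by (rule exI[of _ "c @ xs"], rule exI[of _ u], rule exI[of _ v], rule exI[of _ w], rule exI[of _ "ys @ d"]) simp
next
  case (2 xs u ys)
  then show ?case apply (intro UnI2 CollectI)
    by (rule exI[of _ "c @ xs"], rule exI[of _ u], rule exI[of _ "ys @ d"]) simp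
qed

lemma ee_ctx: "edge_equiv K a b \<Longrightarrow> edge_equiv K (c @ a @ d) (c @ b @ d)"
  unfolding edge_equiv_def
proof (induction rule: rtrancl_induct)
  case base
  then show ?case by simp
next
  case (step y z)
  then have "(c @ y @ d, c @ z @ d) \<in> elem_move K \<union> (elem_move K)\<inverse>"
    using em_ctx by blast
  then show ?case using step.IH by (meson rtrancl.rtrancl_into_rtrancl)
qed

lemma em_mono: "K \<subseteq> K' \<Longrightarrow> elem_move K \<subseteq> elem_move K'"
  unfolding elem_move_def by blast

lemma ee_mono: "K \<subseteq> K' \<Longrightarrow> edge_equiv K a b \<Longrightarrow> edge_equiv K' a b"
  unfolding edge_equiv_def
  by (metis converse_mono em_mono rtrancl_mono sup.mono subsetD)

lemma ee_dup: "{x} \<in> K \<Longrightarrow> edge_equiv K [x, x] [x]"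
  unfolding edge_equiv_def elem_move_def
  by (rule r_into_rtrancl, rule UnI1, rule UnI2, rule CollectI,
      rule exI[of _ "[]"], rule exI[of _ x], rule exI[of _ "[]"]) simp

lemma ee_tri: "{u, v, w} \<in> K \<Longrightarrow> edge_equiv K [u, v, w] [u, w]"
  unfolding edge_equiv_def elem_move_def
  by (rule r_into_rtrancl, rule UnI1, rule UnI1, rule CollectI,
      rule exI[of _ "[]"], rule exI[of _ u], rule exI[of _ v], rule exI[of _ w], rule exI[of _ "[]"]) simp

lemma ee_back: "{x, y} \<in> K \<Longrightarrow> {x} \<in> K \<Longrightarrow> edge_equiv K [x, y, x] [x]"
  using ee_tri[of x y x K] ee_dup[of x K] by (simp add: insert_commute ee_trans)

lemma ee_ctx1: "edge_equiv K a b \<Longrightarrow> edge_equiv K (c @ a) (c @ b)"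
  using ee_ctx[of K a b c "[]"] by simp

lemma ee_ctx2: "edge_equiv K a b \<Longrightarrow> edge_equiv K (a @ d) (b @ d)"
  using ee_ctx[of K a b "[]" d] by simp

definition epath :: "'v set set \<Rightarrow> 'v list \<Rightarrow> bool" where
  "epath K s \<longleftrightarrow> s \<noteq> [] \<and> (\<forall>i. Suc i < length s \<longrightarrow> {s ! i, s ! Suc i} \<in> K) \<and> (\<forall>x\<in>set s. {x} \<in> K)"

lemma epath_Cons2: "epath K (x # y # r) \<longleftrightarrow> {x, y} \<in> K \<and> {x} \<in> K \<and> epath K (y # r)"
  unfolding epath_def
  apply (auto simp: nth_Cons split: nat.splits)
  done

lemma epath_single: "epath K [x] \<longleftrightarrow> {x} \<in> K"
  unfolding epath_def by auto

lemma ee_cancel: "epath K s \<Longrightarrow> edge_equiv K (s @ rev s) [hd s]"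
proof (induction s rule: induct_list012)
  case 1 then show ?case by (simp add: epath_def)
next
  case (2 x) then show ?case by (simp add: epath_single ee_dup)
next
  case (3 x y r)
  then have e: "{x, y} \<in> K" "{x} \<in> K" "epath K (y # r)" by (auto simp: epath_Cons2)
  have "edge_equiv K (x # ((y # r) @ rev (y # r)) @ [x]) (x # [y] @ [x])"
    using ee_ctx[OF 3(2)[OF e(3)], of "[x]" "[x]"] by simp
  also have "edge_equiv K (x # [y] @ [x]) [x]" using ee_back e by simp
  finally show ?case by (simp add: ee_trans)
qed


fun sp :: "('v \<Rightarrow> 'v \<Rightarrow> 'v list) \<Rightarrow> ('v \<Rightarrow> 'v) \<Rightarrow> 'v list \<Rightarrow> 'v list" where
  "sp s f [] = []"
| "sp s f [x] = [f x]"
| "sp s f (x # y # r) = s x y @ sp s f (y # r)"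

fun sp_pre :: "('v \<Rightarrow> 'v \<Rightarrow> 'v list) \<Rightarrow> 'v list \<Rightarrow> 'v \<Rightarrow> 'v list" where
  "sp_pre s [] u = []"
| "sp_pre s (x # xs) u = s x (hd (xs @ [u])) @ sp_pre s xs u"

lemma sp_split: "sp s f (xs @ u # r) = sp_pre s xs u @ sp s f (u # r)"
proof (induction xs)
  case Nil then show ?case by simp
next
  case (Cons x xs)
  then show ?case by (cases xs) auto
qed

lemma sp_hd:
  assumes hs: "\<And>u v. \<exists>T. s u v = f u # T"
  shows "\<exists>T. sp s f (w # ys) = f w # T"
proof (cases ys)
  case Nil then show ?thesis by simp
next
  case (Cons y r)
  obtain T where "s w y = f w # T" using hs by blast
  then show ?thesis using Cons by simp
qed

lemma sp_move:
  assumes hs: "\<And>u v. \<exists>T. s u v = f u # T"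
    and A1: "\<And>u v w. {u, v, w} \<in> K \<Longrightarrow> edge_equiv K' (s u v @ s v w @ [f w]) (s u w @ [f w])"
    and A2: "\<And>u. {u} \<in> K \<Longrightarrow> edge_equiv K' (s u u @ [f u]) [f u]"
    and m: "(a, b) \<in> elem_move K"
  shows "edge_equiv K' (sp s f a) (sp s f b)"
proof -
  have mm: "(\<exists>xs u v w. (\<exists>ys. a = xs @ u # v # w # ys \<and> b = xs @ u # w # ys) \<and> {u, v, w} \<in> K) \<or>
    (\<exists>xs u. (\<exists>ys. a = xs @ u # u # ys \<and> b = xs @ u # ys) \<and> {u} \<in> K)"
    using m unfolding elem_move_def by simp
  from mm show ?thesis
  proof (elim disjE exE conjE)
    fix xs u v w ys
    assume T: "a = xs @ u # v # w # ys" "b = xs @ u # w # ys" "{u, v, w} \<in> K"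
    define P where "P = sp_pre s xs u"
    obtain Tl where Tl: "sp s f (w # ys) = f w # Tl" using sp_hd[of s f, OF hs] by blast
    have "sp s f a = P @ sp s f (u # v # w # ys)"
      using sp_split[of s f xs u "v # w # ys"] T(1) P_def by simp
    also have "sp s f (u # v # w # ys) = s u v @ s v w @ f w # Tl" using Tl by simp
    finally have a: "sp s f a = P @ (s u v @ s v w @ [f w]) @ Tl" by simp
    have "sp s f b = P @ sp s f (u # w # ys)"
      using sp_split[of s f xs u "w # ys"] T(2) P_def by simp
    also have "sp s f (u # w # ys) = s u w @ f w # Tl" using Tl by simp
    finally have b: "sp s f b = P @ (s u w @ [f w]) @ Tl" by simp
    show ?thesis unfolding a b by (rule ee_ctx, rule A1, rule T(3))
  next
    fix xs u ys
    assume D: "a = xs @ u # u # ys" "b = xs @ u # ys" "{u} \<in> K"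
    define P where "P = sp_pre s xs u"
    obtain Tl where Tl: "sp s f (u # ys) = f u # Tl" using sp_hd[of s f, OF hs] by blast
    have "sp s f a = P @ sp s f (u # u # ys)"
      using sp_split[of s f xs u "u # ys"] D(1) P_def by simp
    also have "sp s f (u # u # ys) = s u u @ f u # Tl" using Tl by simp
    finally have a: "sp s f a = P @ (s u u @ [f u]) @ Tl" by simp
    have b: "sp s f b = P @ [f u] @ Tl"
      using sp_split[of s f xs u "ys"] D(2) Tl P_def by simp
    show ?thesis unfolding a b by (rule ee_ctx, rule A2, rule D(3))
  qed
qed

lemma sp_equiv:
  assumes hs: "\<And>u v. \<exists>T. s u v = f u # T"
    and A1: "\<And>u v w. {u, v, w} \<in> K \<Longrightarrow> edge_equiv K' (s u v @ s v w @ [f w]) (s u w @ [f w])"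
    and A2: "\<And>u. {u} \<in> K \<Longrightarrow> edge_equiv K' (s u u @ [f u]) [f u]"
    and e: "edge_equiv K a b"
  shows "edge_equiv K' (sp s f a) (sp s f b)"
  using e unfolding edge_equiv_def[of K]
proof (induction rule: rtrancl_induct)
  case base then show ?case by simp
next
  case (step y z)
  have "(y, z) \<in> elem_move K \<or> (z, y) \<in> elem_move K" using step.hyps(2) by auto
  then have "edge_equiv K' (sp s f y) (sp s f z)"
  proof (elim disjE)
    assume yz: "(y, z) \<in> elem_move K" show ?thesis apply (rule sp_move[of s f K K']) using yz hs A1 A2 apply -
      apply assumption+ done
  next
    assume zy: "(z, y) \<in> elem_move K" show ?thesis apply (rule ee_sym, rule sp_move[of s f K K']) using zy hs A1 A2 apply -
      apply assumption+ done
  qed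
  then show ?case by (rule ee_trans[OF step.IH])
qed




lemma sc_sub: "simplicial_complex K \<Longrightarrow> s \<in> K \<Longrightarrow> t \<subseteq> s \<Longrightarrow> t \<noteq> {} \<Longrightarrow> t \<in> K"
  unfolding simplicial_complex_def by blast

lemma sc_vert: "simplicial_complex K \<Longrightarrow> s \<in> K \<Longrightarrow> x \<in> s \<Longrightarrow> {x} \<in> K"
  using sc_sub[of K s "{x}"] by blast

lemma vert_iff: "simplicial_complex K \<Longrightarrow> x \<in> vertices K \<longleftrightarrow> {x} \<in> K"
  unfolding vertices_def
proof
  assume "simplicial_complex K" "x \<in> \<Union> K"
  then obtain s where "s \<in> K" "x \<in> s" by (elim UnionE)
  then show "{x} \<in> K" using sc_vert \<open>simplicial_complex K\<close> by metis
next
  assume "{x} \<in> K" then show "x \<in> \<Union> K" by (intro UnionI[of "{x}"]) simp_all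
qed

lemma epath_rev: "epath K s \<Longrightarrow> epath K (rev s)"
proof -
  assume a: "epath K s"
  have ne: "rev s \<noteq> []" using a by (simp add: epath_def)
  have st: "{rev s ! i, rev s ! Suc i} \<in> K" if i: "Suc i < length (rev s)" for i
  proof -
    define j where "j = length s - Suc (Suc i)"
    have j1: "Suc j < length s" and j2: "Suc j = length s - Suc i" using i by (simp_all add: j_def)
    have "{s ! j, s ! Suc j} \<in> K" using a j1 by (simp add: epath_def)
    moreover have "rev s ! i = s ! Suc j" using i j2 by (simp add: rev_nth)
    moreover have "rev s ! Suc i = s ! j" using i by (simp add: rev_nth j_def)
    ultimately show ?thesis by (simp add: insert_commute)
  qed
  have "\<forall>x\<in>set (rev s). {x} \<in> K" using a by (simp add: epath_def)
  then show ?thesis using ne st by (simp add: epath_def)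
qed

lemma ee_cancel': "epath K s \<Longrightarrow> edge_equiv K (rev s @ s) [last s]"
  using ee_cancel[OF epath_rev[of K s]] by (simp add: hd_rev)

lemma dup_last: "epath K s \<Longrightarrow> edge_equiv K (s @ [last s] @ B) (s @ B)"
proof -
  assume e: "epath K s"
  then obtain s' l where s: "s = s' @ [l]" unfolding epath_def by (metis rev_exhaust)
  have "{l} \<in> K" using e s unfolding epath_def by auto
  then have "edge_equiv K (s' @ [l, l] @ B) (s' @ [l] @ B)" by (rule ee_ctx[OF ee_dup])
  then show ?thesis using s by simp
qed

definition sR :: "'v set set \<Rightarrow> ('v \<Rightarrow> 'v list) \<Rightarrow> 'v \<Rightarrow> 'v \<Rightarrow> 'v list" where
  "sR Z \<sigma> x y = (if {x, y} \<in> Z then [x] else \<sigma> x @ rev (\<sigma> y))"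

lemma wedge:
  assumes Zc: "simplicial_complex Z" and z0: "{z0} \<in> Z"
    and sig: "\<And>x. epath Z (\<sigma> x) \<and> hd (\<sigma> x) = f x \<and> last (\<sigma> x) = z0"
    and fid: "\<And>x. {x} \<in> Z \<Longrightarrow> f x = x"
    and hyp: "\<And>u v w. {u, v, w} \<in> K \<Longrightarrow> card {u, v, w} = 3 \<Longrightarrow> {u, v, w} \<notin> Z \<Longrightarrow>
               {u, v} \<notin> Z \<and> {v, w} \<notin> Z \<and> {u, w} \<notin> Z"
    and e: "edge_equiv K a b"
  shows "edge_equiv Z (sp (sR Z \<sigma>) f a) (sp (sR Z \<sigma>) f b)"
proof (rule sp_equiv[OF _ _ _ e])
  have fz: "f x = x" if "{x, y} \<in> Z" for x y
    using fid sc_vert[OF Zc that] by simp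
  have fv: "{f x} \<in> Z" for x
    using sig[of x] unfolding epath_def by (metis hd_in_set)
  show hs: "\<exists>T. sR Z \<sigma> u v = f u # T" for u v
    using sig[of u] fz[of u v] unfolding sR_def epath_def by (cases "\<sigma> u") auto
  have canc: "edge_equiv Z (A @ rev (\<sigma> v) @ \<sigma> v @ B) (A @ [z0] @ B)" for A B v
    using ee_ctx[OF ee_cancel'[of Z "\<sigma> v"], of A B] sig[of v] by simp
  have dl: "edge_equiv Z (\<sigma> u @ [z0] @ B) (\<sigma> u @ B)" for u B
    using dup_last[of Z "\<sigma> u" B] sig[of u] by simp
  have G1: "edge_equiv Z (sR Z \<sigma> u u @ [f u]) [f u]" for u
  proof (cases "{u} \<in> Z")
    case True then show ?thesis using fid[OF True] ee_dup[OF True] by (simp add: sR_def)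
  next
    case False
    then have "sR Z \<sigma> u u @ [f u] = \<sigma> u @ rev (\<sigma> u) @ [f u]" by (simp add: sR_def)
    also have "edge_equiv Z \<dots> ([f u] @ [f u])"
      using ee_ctx2[OF ee_cancel[of Z "\<sigma> u"], of "[f u]"] sig[of u] by simp
    also have "edge_equiv Z ([f u] @ [f u]) [f u]" using ee_dup[OF fv] by simp
    finally show ?thesis .
  qed
  show A2: "edge_equiv Z (sR Z \<sigma> u u @ [f u]) [f u]" if "{u} \<in> K" for u using G1 .
  have G2: "edge_equiv Z (sR Z \<sigma> u v @ sR Z \<sigma> v u @ [f u]) [f u]" for u v
  proof (cases "{u, v} \<in> Z")
    case True
    then have "{v, u} \<in> Z" by (simp add: insert_commute)
    then show ?thesis using True fz[OF True] ee_back[OF True sc_vert[OF Zc True]]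
      by (simp add: sR_def)
  next
    case False
    then have "{v, u} \<notin> Z" by (simp add: insert_commute)
    then have "sR Z \<sigma> u v @ sR Z \<sigma> v u @ [f u] = \<sigma> u @ rev (\<sigma> v) @ \<sigma> v @ (rev (\<sigma> u) @ [f u])"
      using False by (simp add: sR_def)
    also have "edge_equiv Z \<dots> (\<sigma> u @ [z0] @ (rev (\<sigma> u) @ [f u]))" by (rule canc)
    also have "edge_equiv Z \<dots> (\<sigma> u @ rev (\<sigma> u) @ [f u])" by (rule dl)
    also have "edge_equiv Z \<dots> ([f u] @ [f u])"
      using ee_ctx2[OF ee_cancel[of Z "\<sigma> u"], of "[f u]"] sig[of u] by simp
    also have "edge_equiv Z ([f u] @ [f u]) [f u]" using ee_dup[OF fv] by simp
    finally show ?thesis .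
  qed
  show "edge_equiv Z (sR Z \<sigma> u v @ sR Z \<sigma> v w @ [f w]) (sR Z \<sigma> u w @ [f w])"
    if uvw: "{u, v, w} \<in> K" for u v w
  proof -
    consider "u = v" | "v = w" | "u = w" | "u \<noteq> v \<and> v \<noteq> w \<and> u \<noteq> w" by blast
    then show ?thesis
    proof cases
      case 1
      obtain T where T: "sR Z \<sigma> u w @ [f w] = f u # T" using hs[of u w] by auto
      have "edge_equiv Z ((sR Z \<sigma> u u @ [f u]) @ T) ([f u] @ T)" by (rule ee_ctx2[OF G1])
      then show ?thesis using 1 T by simp
    next
      case 2
      then show ?thesis using ee_ctx1[OF G1[of v], of "sR Z \<sigma> u v"] by simp
    next
      case 3
      then show ?thesis using G1[of u] G2[of u v] by (meson ee_sym ee_trans)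
    next
      case 4
      then have c3: "card {u, v, w} = 3" by simp
      show ?thesis
      proof (cases "{u, v, w} \<in> Z")
        case True
        have p: "{u, v} \<in> Z" "{v, w} \<in> Z" "{u, w} \<in> Z"
          using sc_sub[OF Zc True] by auto
        then have "f w = w" using fz[of w v] by (simp add: insert_commute)
        then show ?thesis using p ee_tri[OF True] by (simp add: sR_def)
      next
        case False
        then have p: "{u, v} \<notin> Z" "{v, w} \<notin> Z" "{u, w} \<notin> Z" using hyp[OF uvw c3] by auto
        have "sR Z \<sigma> u v @ sR Z \<sigma> v w @ [f w] = \<sigma> u @ rev (\<sigma> v) @ \<sigma> v @ (rev (\<sigma> w) @ [f w])"
          using p by (simp add: sR_def)
        also have "edge_equiv Z \<dots> (\<sigma> u @ [z0] @ (rev (\<sigma> w) @ [f w]))" by (rule canc)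
        also have "edge_equiv Z \<dots> (\<sigma> u @ rev (\<sigma> w) @ [f w])" by (rule dl)
        also have "\<dots> = sR Z \<sigma> u w @ [f w]" using p by (simp add: sR_def)
        finally show ?thesis .
      qed
    qed
  qed
qed


lemma sp_ident:
  "p \<noteq> [] \<Longrightarrow> (\<forall>i. Suc i < length p \<longrightarrow> s (p ! i) (p ! Suc i) = [p ! i]) \<Longrightarrow> f (last p) = last p
   \<Longrightarrow> sp s f p = p"
proof (induction p rule: induct_list012)
  case (3 x y r)
  have "\<forall>i. Suc i < length (y # r) \<longrightarrow> s ((y # r) ! i) ((y # r) ! Suc i) = [(y # r) ! i]"
  proof (intro allI impI)
    fix i assume "Suc i < length (y # r)"
    then show "s ((y # r) ! i) ((y # r) ! Suc i) = [(y # r) ! i]" using 3(4)[rule_format, of "Suc i"] by simp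
  qed
  then have "sp s f (y # r) = y # r" using 3 by simp
  moreover have "s x y = [x]" using 3(4)[rule_format, of 0] by simp
  ultimately show ?case by simp
qed auto

definition sRho :: "'v \<Rightarrow> 'v \<Rightarrow> 'v \<Rightarrow> 'v \<Rightarrow> 'v \<Rightarrow> 'v list" where
  "sRho a b c x y = (if {x, y} = {a, b} then [x, c] else [x])"

lemma removal:
  assumes abc: "card {a, b, c} = 3" and tK: "{a, b, c} \<in> K"
    and sub: "\<And>S. S \<in> K \<Longrightarrow> S \<noteq> {a, b, c} \<Longrightarrow> S \<in> K'"
    and ac: "{a, c} \<in> K'" and cb: "{c, b} \<in> K'"
    and V: "\<And>S x. S \<in> K \<Longrightarrow> x \<in> S \<Longrightarrow> {x} \<in> K'"
    and free: "\<And>T. T \<in> K \<Longrightarrow> card T = 3 \<Longrightarrow> {a, b} \<subseteq> T \<Longrightarrow> T = {a, b, c}"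
    and e: "edge_equiv K p q"
  shows "edge_equiv K' (sp (sRho a b c) id p) (sp (sRho a b c) id q)"
proof (rule sp_equiv[OF _ _ _ e])
  have dist: "a \<noteq> b" "a \<noteq> c" "b \<noteq> c" using abc by (auto simp: card_insert_if split: if_splits)
  have cv: "{c, v} \<in> K'" if "v = a \<or> v = b" for v
    using that ac cb by (auto simp: insert_commute)
  have cK: "{c} \<in> K'" using V[OF tK] by simp
  have cvc: "edge_equiv K' [c, v, c] [c]" if "v = a \<or> v = b" for v
    using ee_back[OF cv[OF that] cK] .
  show hs: "\<exists>T. sRho a b c u v = id u # T" for u v by (simp add: sRho_def)
  have G1: "edge_equiv K' (sRho a b c u u @ [id u]) [id u]" if "{u} \<in> K'" for u
    using dist ee_dup[OF that] by (auto simp: sRho_def doubleton_eq_iff)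
  show A2: "edge_equiv K' (sRho a b c u u @ [id u]) [id u]" if "{u} \<in> K" for u
    using G1 V[OF that] by simp
  have G2: "edge_equiv K' (sRho a b c u v @ sRho a b c v u @ [id u]) [id u]" if uv: "{u, v} \<in> K" for u v
  proof (cases "{u, v} = {a, b}")
    case True
    then have v: "v = a \<or> v = b" and u: "u = a \<or> u = b" by (auto simp: doubleton_eq_iff)
    have "{v, u} = {a, b}" using True by (simp add: insert_commute)
    then have "sRho a b c u v @ sRho a b c v u @ [id u] = [u] @ [c, v, c] @ [u]"
      using True by (simp add: sRho_def)
    also have "edge_equiv K' \<dots> ([u] @ [c] @ [u])" by (rule ee_ctx[OF cvc[OF v]])
    also have "edge_equiv K' ([u] @ [c] @ [u]) [u]"
      using ee_back[of u c K'] cv[OF u] V[OF uv] by (simp add: insert_commute)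
    finally show ?thesis by simp
  next
    case False
    then have "{v, u} \<noteq> {a, b}" by (simp add: insert_commute)
    moreover have "{u, v} \<noteq> {a, b, c}"
    proof
      assume "{u, v} = {a, b, c}"
      then have "card {u, v} = 3" using abc by simp
      moreover have "card {u, v} \<le> 2" by (simp add: card_insert_if)
      ultimately show False by simp
    qed
    then have "{u, v} \<in> K'" using sub[OF uv] by blast
    ultimately show ?thesis using False ee_back[of u v K'] V[OF uv] by (simp add: sRho_def)
  qed
  show "edge_equiv K' (sRho a b c u v @ sRho a b c v w @ [id w]) (sRho a b c u w @ [id w])"
    if uvw: "{u, v, w} \<in> K" for u v w
  proof -
    have Vu: "{u} \<in> K'" "{v} \<in> K'" "{w} \<in> K'" using V[OF uvw] by auto
    consider "u = v" | "v = w" | "u = w" | "u \<noteq> v \<and> v \<noteq> w \<and> u \<noteq> w" by blast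
    then show ?thesis
    proof cases
      case 1
      obtain T where T: "sRho a b c u w @ [id w] = id u # T" using hs[of u w] by auto
      have "edge_equiv K' ((sRho a b c u u @ [id u]) @ T) ([id u] @ T)" by (rule ee_ctx2[OF G1[OF Vu(1)]])
      then show ?thesis using 1 T by simp
    next
      case 2
      then show ?thesis using ee_ctx1[OF G1[OF Vu(2)], of "sRho a b c u v"] by simp
    next
      case 3
      have "{u, v} \<in> K" using uvw 3 by (simp add: insert_commute)
      then show ?thesis using 3 G1[OF Vu(1)] G2[of u v] by (meson ee_sym ee_trans)
    next
      case 4
      then have c3: "card {u, v, w} = 3" by simp
      show ?thesis
      proof (cases "{u, v, w} = {a, b, c}")
        case False
        then have nab: "{a, b} \<noteq> {u, v}" "{a, b} \<noteq> {v, w}" "{a, b} \<noteq> {u, w}"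
          using free[OF uvw c3] by auto
        have "{u, v, w} \<in> K'" using sub[OF uvw False] .
        then show ?thesis using nab ee_tri[of u v w K'] by (simp add: sRho_def eq_commute[of "{a, b}"])
      next
        case True
        consider "v = c" "{u, w} = {a, b}" | "u = c" "{v, w} = {a, b}" | "w = c" "{u, v} = {a, b}"
        proof -
          have m: "u \<in> {a, b, c}" "v \<in> {a, b, c}" "w \<in> {a, b, c}" using True by blast+
          show "\<And>thesis. (v = c \<Longrightarrow> {u, w} = {a, b} \<Longrightarrow> thesis) \<Longrightarrow> (u = c \<Longrightarrow> {v, w} = {a, b} \<Longrightarrow> thesis) \<Longrightarrow> (w = c \<Longrightarrow> {u, v} = {a, b} \<Longrightarrow> thesis) \<Longrightarrow> thesis"
            using m 4 dist by (elim insertE emptyE; auto simp: insert_commute)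
        qed
        then show ?thesis
        proof cases
          case 1
          then have "{u, c} \<noteq> {a, b}" "{c, w} \<noteq> {a, b}" using dist by (auto simp: doubleton_eq_iff)
          then show ?thesis using 1 by (simp add: sRho_def)
        next
          case 2
          then have n: "{c, v} \<noteq> {a, b}" "{c, w} \<noteq> {a, b}" using dist by (auto simp: doubleton_eq_iff)
          have v: "v = a \<or> v = b" using 2 by (auto simp: doubleton_eq_iff)
          have "sRho a b c u v @ sRho a b c v w @ [id w] = [c, v, c] @ [w]" using 2 n by (simp add: sRho_def)
          also have "edge_equiv K' \<dots> ([c] @ [w])" by (rule ee_ctx2[OF cvc[OF v]])
          also have "[c] @ [w] = sRho a b c u w @ [id w]" using 2 n by (simp add: sRho_def)
          finally show ?thesis .
        next
          case 3
          then have n: "{u, c} \<noteq> {a, b}" "{v, c} \<noteq> {a, b}" using dist by (auto simp: doubleton_eq_iff)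
          have v: "v = a \<or> v = b" using 3 by (auto simp: doubleton_eq_iff)
          have "sRho a b c u v @ sRho a b c v w @ [id w] = [u] @ [c, v, c]" using 3 n by (simp add: sRho_def)
          also have "edge_equiv K' \<dots> ([u] @ [c])" by (rule ee_ctx1[OF cvc[OF v]])
          also have "[u] @ [c] = sRho a b c u w @ [id w]" using 3 n by (simp add: sRho_def)
          finally show ?thesis .
        qed
      qed
    qed
  qed
qed


definition KD :: "'v set set \<Rightarrow> 'v set set \<Rightarrow> 'v set set \<Rightarrow> 'v set set" where
  "KD Z X D = Z \<union> D \<union> {s \<in> X. card s \<le> 2}"

definition TX :: "'v set set \<Rightarrow> 'v set set \<Rightarrow> 'v set set" where
  "TX Z X = {t \<in> X. card t = 3 \<and> t \<notin> Z}"

lemma KD_mono: "D \<subseteq> D' \<Longrightarrow> KD Z X D \<subseteq> KD Z X D'"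
  unfolding KD_def by blast

lemma card3_le: "card {u, v, w} \<le> 3"
  by (auto simp: card_insert_if)

lemma em_KD:
  assumes "(a, b) \<in> elem_move X" "Z \<subseteq> X"
  shows "\<exists>D. finite D \<and> D \<subseteq> TX Z X \<and> (a, b) \<in> elem_move (KD Z X D)"
proof -
  have mm: "(\<exists>xs u v w. (\<exists>ys. a = xs @ u # v # w # ys \<and> b = xs @ u # w # ys) \<and> {u, v, w} \<in> X) \<or>
    (\<exists>xs u. (\<exists>ys. a = xs @ u # u # ys \<and> b = xs @ u # ys) \<and> {u} \<in> X)"
    using assms(1) unfolding elem_move_def by simp
  from mm show ?thesis
  proof (elim disjE exE conjE)
    fix xs u v w ys
    assume T: "a = xs @ u # v # w # ys" "b = xs @ u # w # ys" "{u, v, w} \<in> X"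
    define D where "D = {t. t = {u, v, w} \<and> t \<in> TX Z X}"
    have fD: "finite D" "D \<subseteq> TX Z X" unfolding D_def by auto
    have "{u, v, w} \<in> KD Z X D"
      using T(3) card3_le[of u v w] unfolding KD_def D_def TX_def by auto
    then have "(a, b) \<in> elem_move (KD Z X D)"
      unfolding elem_move_def T(1,2) by (intro UnI1 CollectI) (rule exI[of _ xs], rule exI[of _ u],
        rule exI[of _ v], rule exI[of _ w], rule exI[of _ ys], simp)
    then show ?thesis using fD by blast
  next
    fix xs u ys
    assume T: "a = xs @ u # u # ys" "b = xs @ u # ys" "{u} \<in> X"
    have "{u} \<in> KD Z X {}" using T(3) unfolding KD_def by auto
    then have "(a, b) \<in> elem_move (KD Z X {})"
      unfolding elem_move_def T(1,2) by (intro UnI2 CollectI) (rule exI[of _ xs], rule exI[of _ u],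
        rule exI[of _ ys], simp)
    then show ?thesis by blast
  qed
qed

lemma ee_KD:
  assumes "edge_equiv X p q" "Z \<subseteq> X"
  shows "\<exists>D. finite D \<and> D \<subseteq> TX Z X \<and> edge_equiv (KD Z X D) p q"
  using assms(1) unfolding edge_equiv_def[of X]
proof (induction rule: rtrancl_induct)
  case base
  then show ?case by (intro exI[of _ "{}"]) simp
next
  case (step y z)
  obtain D where D: "finite D" "D \<subseteq> TX Z X" "edge_equiv (KD Z X D) p y" using step.IH by blast
  have "(y, z) \<in> elem_move X \<or> (z, y) \<in> elem_move X" using step.hyps(2) by auto
  then obtain D1 where D1: "finite D1" "D1 \<subseteq> TX Z X" "edge_equiv (KD Z X D1) y z"
  proof (elim disjE)
    assume "(y, z) \<in> elem_move X"
    then obtain D1 where "finite D1" "D1 \<subseteq> TX Z X" "(y, z) \<in> elem_move (KD Z X D1)"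
      using em_KD[OF _ assms(2)] by blast
    moreover then have "edge_equiv (KD Z X D1) y z" unfolding edge_equiv_def by blast
    ultimately show ?thesis using that by blast
  next
    assume "(z, y) \<in> elem_move X"
    then obtain D1 where "finite D1" "D1 \<subseteq> TX Z X" "(z, y) \<in> elem_move (KD Z X D1)"
      using em_KD[OF _ assms(2)] by blast
    moreover then have "edge_equiv (KD Z X D1) y z" unfolding edge_equiv_def by blast
    ultimately show ?thesis using that by blast
  qed
  have "edge_equiv (KD Z X (D \<union> D1)) p y" by (rule ee_mono[OF KD_mono D(3)]) simp
  moreover have "edge_equiv (KD Z X (D \<union> D1)) y z" by (rule ee_mono[OF KD_mono D1(3)]) simp
  ultimately show ?case using D D1 by (meson ee_trans finite_UnI le_sup_iff)
qed


definition zsteps :: "'v set set \<Rightarrow> 'v list \<Rightarrow> bool" where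
  "zsteps Z p \<longleftrightarrow> (\<forall>i. Suc i < length p \<longrightarrow> {p ! i, p ! Suc i} \<in> Z)"

lemma path_exists:
  assumes Zc: "simplicial_complex Z"
    and r: "(x, y) \<in> {(a, b). {a, b} \<in> Z}\<^sup>*"
  shows "{x} \<in> Z \<Longrightarrow> \<exists>s. epath Z s \<and> hd s = x \<and> last s = y"
  using r
proof (induction rule: converse_rtrancl_induct)
  case base
  then show ?case by (intro exI[of _ "[y]"]) (simp add: epath_single)
next
  case (step x x')
  then have xx: "{x, x'} \<in> Z" by simp
  have "{x'} \<in> Z" using sc_vert[OF Zc xx] by simp
  then obtain s where s: "epath Z s" "hd s = x'" "last s = y" using step.IH by blast
  then obtain r where "s = x' # r" unfolding epath_def by (cases s) auto
  then show ?case using s xx step.prems by (intro exI[of _ "x # s"]) (simp add: epath_Cons2)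
qed

lemma wedge_apply:
  assumes Zc: "simplicial_complex Z" and Zconn: "sc_connected Z"
    and hyp: "\<And>u v w. {u, v, w} \<in> K \<Longrightarrow> card {u, v, w} = 3 \<Longrightarrow> {u, v, w} \<notin> Z \<Longrightarrow>
               {u, v} \<notin> Z \<and> {v, w} \<notin> Z \<and> {u, w} \<notin> Z"
    and p: "p \<noteq> []" "zsteps Z p" "{last p} \<in> Z" and u: "{u} \<in> Z"
    and e: "edge_equiv K p [u]"
  shows "edge_equiv Z p [u]"
proof -
  obtain s0 where "s0 \<in> Z" using Zconn unfolding sc_connected_def by blast
  then obtain z0 where "z0 \<in> s0" using Zc unfolding simplicial_complex_def by blast
  then have z0: "{z0} \<in> Z" using sc_vert[OF Zc \<open>s0 \<in> Z\<close>] by blast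
  have z0v: "z0 \<in> vertices Z" using z0 by (simp add: vert_iff[OF Zc])
  define \<sigma> where "\<sigma> x = (if {x} \<in> Z then (SOME s. epath Z s \<and> hd s = x \<and> last s = z0) else [z0])" for x
  define f where "f x = (if {x} \<in> Z then x else z0)" for x
  have sig: "epath Z (\<sigma> x) \<and> hd (\<sigma> x) = f x \<and> last (\<sigma> x) = z0" for x
  proof (cases "{x} \<in> Z")
    case True
    then have "x \<in> vertices Z" by (simp add: vert_iff[OF Zc])
    then have "(x, z0) \<in> {(a, b). {a, b} \<in> Z}\<^sup>*" using Zconn z0v unfolding sc_connected_def by blast
    then have ex: "\<exists>s. epath Z s \<and> hd s = x \<and> last s = z0" using path_exists[OF Zc] True by blast
    have "epath Z (SOME s. epath Z s \<and> hd s = x \<and> last s = z0) \<and> hd (SOME s. epath Z s \<and> hd s = x \<and> last s = z0) = x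
      \<and> last (SOME s. epath Z s \<and> hd s = x \<and> last s = z0) = z0"
      by (rule someI_ex[OF ex])
    then show ?thesis using True unfolding \<sigma>_def f_def by simp
  next
    case False
    then show ?thesis unfolding \<sigma>_def f_def using z0 by (simp add: epath_single)
  qed
  have fid: "f x = x" if "{x} \<in> Z" for x using that by (simp add: f_def)
  have w: "edge_equiv Z (sp (sR Z \<sigma>) f p) (sp (sR Z \<sigma>) f [u])"
    by (rule wedge[OF Zc z0 sig fid hyp e])
  have "sp (sR Z \<sigma>) f p = p"
    using p fid by (intro sp_ident) (auto simp: zsteps_def sR_def)
  moreover have "sp (sR Z \<sigma>) f [u] = [u]" using fid u by simp
  ultimately show ?thesis using w by simp
qed

lemma remove1:
  assumes Xc: "simplicial_complex X" and ZX: "Z \<subseteq> X" and Zc: "simplicial_complex Z"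
    and tD: "\<tau> \<in> D" and DT: "D \<subseteq> TX Z X"
    and ec: "card e = 2" "e \<subseteq> \<tau>" "e \<notin> Z" and free: "\<And>t'. t' \<in> D \<Longrightarrow> e \<subseteq> t' \<Longrightarrow> t' = \<tau>"
    and p: "p \<noteq> []" "zsteps Z p" and q: "q \<noteq> []" "zsteps Z q"
    and ee: "edge_equiv (KD Z X D) p q"
  shows "edge_equiv (KD Z X (D - {\<tau>})) p q"
proof -
  have tT: "\<tau> \<in> X" "card \<tau> = 3" "\<tau> \<notin> Z" using tD DT unfolding TX_def by auto
  obtain a b where ab: "e = {a, b}" "a \<noteq> b" using ec(1) by (meson card_2_iff)
  have fin: "finite \<tau>" using tT(2) by (metis card.infinite zero_neq_numeral)
  have "card (\<tau> - e) = 1" using tT(2) ec(1,2) fin by (simp add: card_Diff_subset finite_subset)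
  then obtain c where c: "\<tau> - e = {c}" by (meson card_1_singletonE)
  have tau: "\<tau> = {a, b, c}" using c ec(2) ab by blast
  have abc: "card {a, b, c} = 3" using tT(2) tau by simp
  have sube: "s \<in> X" if "s \<subseteq> \<tau>" "s \<noteq> {}" for s using sc_sub[OF Xc tT(1) that] .
  have KX: "S \<in> X" if "S \<in> KD Z X D" for S using that ZX DT unfolding KD_def TX_def by auto
  have R: "edge_equiv (KD Z X (D - {\<tau>})) (sp (sRho a b c) id p) (sp (sRho a b c) id q)"
  proof (rule removal[OF abc _ _ _ _ _ _ ee])
    show "{a, b, c} \<in> KD Z X D" using tD tau unfolding KD_def by simp
    show "S \<in> KD Z X (D - {\<tau>})" if "S \<in> KD Z X D" "S \<noteq> {a, b, c}" for S
      using that tau unfolding KD_def by auto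
    show "{a, c} \<in> KD Z X (D - {\<tau>})" using sube[of "{a, c}"] tau unfolding KD_def
      by (auto simp: card_insert_if)
    show "{c, b} \<in> KD Z X (D - {\<tau>})" using sube[of "{c, b}"] tau unfolding KD_def
      by (auto simp: card_insert_if)
    show "{x} \<in> KD Z X (D - {\<tau>})" if "S \<in> KD Z X D" "x \<in> S" for S x
      using sc_vert[OF Xc KX[OF that(1)] that(2)] unfolding KD_def by auto
    show "T = {a, b, c}" if "T \<in> KD Z X D" "card T = 3" "{a, b} \<subseteq> T" for T
    proof -
      have "T \<in> Z \<or> T \<in> D" using that unfolding KD_def by auto
      then show ?thesis
      proof
        assume "T \<in> Z"
        then have "e \<in> Z" using sc_sub[OF Zc _ that(3)] ab by auto
        then show ?thesis using ec by simp
      next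
        assume "T \<in> D" then show ?thesis using free that ab tau by auto
      qed
    qed
  qed
  have nz: "{x, y} \<noteq> {a, b}" if "{x, y} \<in> Z" for x y using that ec(3) ab by auto
  have "sp (sRho a b c) id p = p"
    using p nz by (intro sp_ident) (auto simp: zsteps_def sRho_def)
  moreover have "sp (sRho a b c) id q = q"
    using q nz by (intro sp_ident) (auto simp: zsteps_def sRho_def)
  ultimately show ?thesis using R by simp
qed

lemma remove_iter:
  assumes Xc: "simplicial_complex X" and ZX: "Z \<subseteq> X" and Zc: "simplicial_complex Z"
    and fR: "finite R"
    and p: "p \<noteq> []" "zsteps Z p" and q: "q \<noteq> []" "zsteps Z q"
  shows "R \<subseteq> D \<Longrightarrow> D \<subseteq> TX Z X \<Longrightarrow>
    (\<forall>\<tau>\<in>R. \<exists>e. card e = 2 \<and> e \<subseteq> \<tau> \<and> e \<notin> Z \<and> (\<forall>t'\<in>D. e \<subseteq> t' \<longrightarrow> t' = \<tau>)) \<Longrightarrow>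
    edge_equiv (KD Z X D) p q \<Longrightarrow> edge_equiv (KD Z X (D - R)) p q"
  using fR
proof (induction R arbitrary: D rule: finite_induct)
  case empty
  then show ?case by simp
next
  case (insert \<tau> R)
  obtain e where e: "card e = 2" "e \<subseteq> \<tau>" "e \<notin> Z" "\<forall>t'\<in>D. e \<subseteq> t' \<longrightarrow> t' = \<tau>"
    using insert.prems(3) by blast
  have E1: "edge_equiv (KD Z X (D - {\<tau>})) p q"
    using remove1[OF Xc ZX Zc _ insert.prems(2) e(1,2,3) _ p q insert.prems(4)] insert.prems(1) e(4)
    by blast
  have S1: "R \<subseteq> D - {\<tau>}" using insert by blast
  have S2: "D - {\<tau>} \<subseteq> TX Z X" using insert.prems(2) by blast
  have S3: "\<forall>\<tau>'\<in>R. \<exists>e. card e = 2 \<and> e \<subseteq> \<tau>' \<and> e \<notin> Z \<and> (\<forall>t'\<in>D - {\<tau>}. e \<subseteq> t' \<longrightarrow> t' = \<tau>')"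
  proof
    fix \<tau>' assume h: "\<tau>' \<in> R"
    then have "\<tau>' \<in> insert \<tau> R" by simp
    then obtain e' where e': "card e' = 2" "e' \<subseteq> \<tau>'" "e' \<notin> Z" "\<forall>t'\<in>D. e' \<subseteq> t' \<longrightarrow> t' = \<tau>'"
      using insert.prems(3) by blast
    show "\<exists>e. card e = 2 \<and> e \<subseteq> \<tau>' \<and> e \<notin> Z \<and> (\<forall>t'\<in>D - {\<tau>}. e \<subseteq> t' \<longrightarrow> t' = \<tau>')"
      by (rule exI[of _ e']) (use e' in auto)
  qed
  have "edge_equiv (KD Z X (D - {\<tau>} - R)) p q" by (rule insert.IH[OF S1 S2 S3 E1])
  moreover have "D - {\<tau>} - R = D - insert \<tau> R" by blast
  ultimately show ?case by simp
qed


definition orb :: "('g, 'm) monoid_scheme \<Rightarrow> ('g \<Rightarrow> 'v \<Rightarrow> 'v) \<Rightarrow> 'v set \<Rightarrow> 'v set set" where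
  "orb G \<phi> t = {\<phi> g ` t | g. g \<in> carrier G}"

lemma ga_one:
  assumes ga: "group_action G V \<phi>" and t: "t \<subseteq> V"
  shows "\<phi> \<one>\<^bsub>G\<^esub> ` t = t"
proof -
  interpret group_action G V \<phi> by (rule ga)
  have "\<phi> \<one>\<^bsub>G\<^esub> x = x" if "x \<in> V" for x using id_eq_one that by (metis restrict_apply')
  then show ?thesis using t by (simp add: subset_iff image_iff)
qed

lemma ga_comp:
  assumes ga: "group_action G V \<phi>" and t: "t \<subseteq> V" and g: "g \<in> carrier G" and h: "h \<in> carrier G"
  shows "\<phi> (g \<otimes>\<^bsub>G\<^esub> h) ` t = \<phi> g ` \<phi> h ` t"
proof -
  interpret group_action G V \<phi> by (rule ga)
  show ?thesis using composition_rule[OF _ g h] t by (auto simp: image_iff subset_iff)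
qed

lemma ga_sub:
  assumes ga: "group_action G V \<phi>" and t: "t \<subseteq> V" and g: "g \<in> carrier G"
  shows "\<phi> g ` t \<subseteq> V"
proof -
  interpret group_action G V \<phi> by (rule ga)
  show ?thesis using element_image[OF g] t by blast
qed

lemma ga_inv:
  assumes gr: "group G" and ga: "group_action G V \<phi>" and t: "t \<subseteq> V" and g: "g \<in> carrier G"
  shows "\<phi> (inv\<^bsub>G\<^esub> g) ` \<phi> g ` t = t" "\<phi> g ` \<phi> (inv\<^bsub>G\<^esub> g) ` t = t"
proof -
  interpret group G by (rule gr)
  show "\<phi> (inv\<^bsub>G\<^esub> g) ` \<phi> g ` t = t"
    using ga_comp[OF ga t inv_closed[OF g] g] ga_one[OF ga t] g by simp
  show "\<phi> g ` \<phi> (inv\<^bsub>G\<^esub> g) ` t = t"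
    using ga_comp[OF ga t g inv_closed[OF g]] ga_one[OF ga t] g by simp
qed

lemma ga_card:
  assumes ga: "group_action G V \<phi>" and t: "t \<subseteq> V" and g: "g \<in> carrier G"
  shows "card (\<phi> g ` t) = card t"
proof -
  interpret group_action G V \<phi> by (rule ga)
  show ?thesis using inj_prop[OF g] t by (meson card_image inj_on_subset)
qed

lemma orb_self:
  assumes gr: "group G" and ga: "group_action G V \<phi>" and t: "t \<subseteq> V"
  shows "t \<in> orb G \<phi> t"
  unfolding orb_def using ga_one[OF ga t] monoid.one_closed[OF group.is_monoid[OF gr]] by force

lemma orb_img:
  assumes gr: "group G" and ga: "group_action G V \<phi>" and t: "t \<subseteq> V" and g: "g \<in> carrier G"
  shows "orb G \<phi> (\<phi> g ` t) = orb G \<phi> t"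
proof -
  interpret group G by (rule gr)
  show ?thesis unfolding orb_def
  proof (intro equalityI subsetI)
    fix x assume "x \<in> {\<phi> h ` \<phi> g ` t |h. h \<in> carrier G}"
    then obtain h where hh: "h \<in> carrier G" "x = \<phi> h ` \<phi> g ` t" by blast
    then have "x = \<phi> (h \<otimes>\<^bsub>G\<^esub> g) ` t" using ga_comp[OF ga t hh(1) g] hh by simp
    then show "x \<in> {\<phi> h ` t |h. h \<in> carrier G}" using hh g by blast
  next
    fix x assume "x \<in> {\<phi> h ` t |h. h \<in> carrier G}"
    then obtain h where hh: "h \<in> carrier G" "x = \<phi> h ` t" by blast
    have "\<phi> (h \<otimes>\<^bsub>G\<^esub> inv\<^bsub>G\<^esub> g) ` \<phi> g ` t = \<phi> h ` \<phi> (inv\<^bsub>G\<^esub> g) ` \<phi> g ` t"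
      using ga_comp[OF ga ga_sub[OF ga t g] hh(1) inv_closed[OF g]] by simp
    also have "\<dots> = x" using ga_inv(1)[OF gr ga t g] hh by simp
    finally show "x \<in> {\<phi> h ` \<phi> g ` t |h. h \<in> carrier G}" using hh g by (metis (mono_tags, lifting) CollectI m_closed inv_closed)
  qed
qed


lemma tri_mono: "Y \<subseteq> Y' \<Longrightarrow> triangles_at Y e \<subseteq> triangles_at Y' e"
  unfolding triangles_at_def by blast

lemma deg_mono: "Y \<subseteq> Y' \<Longrightarrow> degree Y e \<le> degree Y' e"
proof -
  assume s: "Y \<subseteq> Y'"
  show ?thesis
  proof (cases "finite (triangles_at Y' e)")
    case True
    then have "finite (triangles_at Y e)" using tri_mono[OF s] finite_subset by blast
    then show ?thesis using True card_mono[OF True tri_mono[OF s]] by (simp add: degree_def)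
  next
    case False
    then show ?thesis by (simp add: degree_def)
  qed
qed

lemma deg_ge2:
  assumes "t1 \<in> triangles_at Y e" "t2 \<in> triangles_at Y e" "t1 \<noteq> t2"
  shows "degree Y e \<ge> 2"
proof (cases "finite (triangles_at Y e)")
  case True
  have "card {t1, t2} \<le> card (triangles_at Y e)" using assms True by (intro card_mono) auto
  then have "2 \<le> card (triangles_at Y e)" using assms(3) by simp
  then show ?thesis using True by (simp add: degree_def numeral_eq_enat)
next
  case False
  then show ?thesis by (simp add: degree_def)
qed

lemma deg_ge3:
  assumes d: "degree Y e \<ge> 2" and s: "Y \<subseteq> Y'" and t: "t \<in> triangles_at Y' e" "t \<notin> Y"
  shows "degree Y' e \<ge> 3"
proof (cases "finite (triangles_at Y' e)")
  case True
  then have fY: "finite (triangles_at Y e)" using tri_mono[OF s] finite_subset by blast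
  then have c2: "2 \<le> card (triangles_at Y e)" using d by (simp add: degree_def numeral_eq_enat)
  have tn: "t \<notin> triangles_at Y e" using t(2) unfolding triangles_at_def by blast
  have "card (insert t (triangles_at Y e)) \<le> card (triangles_at Y' e)"
    using True t(1) tri_mono[OF s] by (intro card_mono) auto
  then have "3 \<le> card (triangles_at Y' e)" using c2 tn fY by simp
  then show ?thesis using True by (simp add: degree_def numeral_eq_enat)
next
  case False
  then show ?thesis by (simp add: degree_def)
qed


theorem corollary3p4:
  fixes G :: "('g, 'm) monoid_scheme" and \<phi> :: "'g \<Rightarrow> 'v \<Rightarrow> 'v"
    and X Z :: "'v set set"
  assumes "group G"
    and "simplicial_complex X"
    and "simplicial_action G \<phi> X"
    and "sc_connected X"
    and "G_cs G \<phi> X Z"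
    and "sc_connected Z"
    and "essential Z"
    and "\<not> pi1_injective Z X"
  shows "\<exists>W. G_cs G \<phi> X W \<and> thick W \<and> Z \<subseteq> W"
proof -
  note grp = assms(1) and Xc = assms(2) and act = assms(3) and Zcs = assms(5)
    and Zconn = assms(6) and Zess = assms(7) and npi = assms(8)
  interpret group G by (rule grp)
  define V where "V = vertices X"
  have ga: "group_action G V \<phi>" using act by (simp add: simplicial_action_def V_def)
  have actX: "\<phi> g ` \<sigma> \<in> X" if "g \<in> carrier G" "\<sigma> \<in> X" for g \<sigma>
    using act that unfolding simplicial_action_def by blast
  have ZX: "Z \<subseteq> X" and Zc: "simplicial_complex Z" using Zcs by (auto simp: G_cs_def subcomplex_def)
  have Zinv: "\<phi> g ` \<sigma> \<in> Z" if "g \<in> carrier G" "\<sigma> \<in> Z" for g \<sigma>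
    using Zcs that unfolding G_cs_def by blast
  have Zfin: "finite {orb G \<phi> \<sigma> | \<sigma>. \<sigma> \<in> Z}" using Zcs by (simp add: G_cs_def orb_def)
  have XV: "\<sigma> \<subseteq> V" if "\<sigma> \<in> X" for \<sigma> using that by (auto simp: V_def vertices_def)
  have Znot: "\<phi> g ` \<sigma> \<notin> Z" if "g \<in> carrier G" "\<sigma> \<in> X" "\<sigma> \<notin> Z" for g \<sigma>
  proof
    assume "\<phi> g ` \<sigma> \<in> Z"
    then have "\<phi> (inv\<^bsub>G\<^esub> g) ` \<phi> g ` \<sigma> \<in> Z" using Zinv that(1) by simp
    then show False using ga_inv(1)[OF grp ga XV[OF that(2)] that(1)] that(3) by simp
  qed
  have TXinv: "\<phi> g ` t \<in> TX Z X" if "g \<in> carrier G" "t \<in> TX Z X" for g t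
    using that actX Znot ga_card[OF ga XV] unfolding TX_def by auto
  have TXV: "t \<subseteq> V" if "t \<in> TX Z X" for t using that XV unfolding TX_def by auto

  obtain p where p: "edge_path Z p" "hd p = last p" "edge_equiv X p [hd p]" "\<not> edge_equiv Z p [hd p]"
    using npi unfolding pi1_injective_def by blast
  define u where "u = hd p"
  have pne: "p \<noteq> []" using p(1) by (simp add: edge_path_def)
  have len: "Suc 0 < length p"
  proof (rule ccontr)
    assume "\<not> Suc 0 < length p"
    then obtain x where "p = [x]" using pne by (cases p) auto
    then show False using p(4) by simp
  qed
  have zp: "zsteps Z p" using p(1) by (simp add: edge_path_def zsteps_def)
  have "{p ! 0, p ! Suc 0} \<in> Z" using zp len by (simp add: zsteps_def)
  then have uZ: "{u} \<in> Z" using sc_vert[OF Zc] pne unfolding u_def by (simp add: hd_conv_nth)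
  have lastZ: "{last p} \<in> Z" using uZ p(2) u_def by simp
  obtain D0 where D0: "finite D0" "D0 \<subseteq> TX Z X" "edge_equiv (KD Z X D0) p [u]"
    using ee_KD[OF p(3) ZX] unfolding u_def by blast

  define Ob where "Ob = orb G \<phi> ` D0"
  define F where "F = {Q. Q \<subseteq> Ob \<and> (\<exists>D'. finite D' \<and> D' \<subseteq> \<Union>Q \<and> D' \<subseteq> TX Z X \<and> edge_equiv (KD Z X D') p [u])}"
  have finOb: "finite Ob" using D0(1) by (simp add: Ob_def)
  have "D0 \<subseteq> \<Union>Ob" unfolding Ob_def using orb_self[OF grp ga] TXV D0(2) by blast
  then have "Ob \<in> F" unfolding F_def using D0 by blast
  then obtain Q where Q: "Q \<in> F" and Qmin: "\<forall>Q'. Q' \<in> F \<longrightarrow> card Q \<le> card Q'"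
    using ex_has_least_nat[of "\<lambda>x. x \<in> F" Ob card] by blast
  obtain D' where D': "finite D'" "D' \<subseteq> \<Union>Q" "D' \<subseteq> TX Z X" "edge_equiv (KD Z X D') p [u]"
    using Q unfolding F_def by blast
  have QOb: "Q \<subseteq> Ob" using Q unfolding F_def by blast
  have finQ: "finite Q" using finite_subset[OF QOb finOb] .
  define S where "S = \<Union>Q"
  have S_rep: "\<exists>d\<in>D0. \<exists>g\<in>carrier G. \<tau> = \<phi> g ` d \<and> orb G \<phi> d \<in> Q" if tS: "\<tau> \<in> S" for \<tau>
  proof -
    obtain B where B: "B \<in> Q" "\<tau> \<in> B" using tS S_def by blast
    then obtain d where d: "d \<in> D0" "B = orb G \<phi> d" using QOb Ob_def by blast
    then show ?thesis using B unfolding orb_def by blast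
  qed
  have S_TX: "\<tau> \<in> TX Z X" if "\<tau> \<in> S" for \<tau>
    using S_rep[OF that] D0(2) TXinv by blast
  have S_orb: "orb G \<phi> \<tau> \<in> Q" if tS: "\<tau> \<in> S" for \<tau>
  proof -
    obtain d g where dg: "d \<in> D0" "g \<in> carrier G" "\<tau> = \<phi> g ` d" "orb G \<phi> d \<in> Q"
      using S_rep[OF tS] by blast
    have "d \<subseteq> V" using TXV D0(2) dg(1) by blast
    then have "orb G \<phi> \<tau> = orb G \<phi> d" using orb_img[OF grp ga _ dg(2)] dg(3) by simp
    then show ?thesis using dg(4) by simp
  qed
  have S_inv: "\<phi> g ` \<tau> \<in> S" if gt: "g \<in> carrier G" "\<tau> \<in> S" for g \<tau>
  proof -
    have "\<phi> g ` \<tau> \<in> orb G \<phi> \<tau>" using gt(1) unfolding orb_def by blast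
    then show ?thesis using S_orb[OF gt(2)] S_def by blast
  qed
  have SV: "\<tau> \<subseteq> V" if "\<tau> \<in> S" for \<tau> using TXV S_TX that by blast
  have D'S: "D' \<subseteq> S" using D'(2) S_def by simp
  have S3: "t \<in> X" "card t = 3" "t \<notin> Z" if "t \<in> S" for t using S_TX[OF that] unfolding TX_def by auto

  have nonfree: "\<exists>t'\<in>S. t' \<noteq> t \<and> e \<subseteq> t'" if t: "t \<in> S" and e: "card e = 2" "e \<subseteq> t" "e \<notin> Z" for t e
  proof (rule ccontr)
    assume free: "\<not> (\<exists>t'\<in>S. t' \<noteq> t \<and> e \<subseteq> t')"
    define Q' where "Q' = Q - {orb G \<phi> t}"
    have ot: "orb G \<phi> t \<in> Q" using S_orb[OF t] .
    have "card Q' < card Q" unfolding Q'_def using finQ ot by (rule card_Diff1_less)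
    moreover have "Q' \<in> F"
    proof -
      define R where "R = D' \<inter> orb G \<phi> t"
      have fR: "finite R" using D'(1) R_def by simp
      have RD: "R \<subseteq> D'" using R_def by simp
      have Rfree: "\<forall>\<tau>\<in>R. \<exists>e. card e = 2 \<and> e \<subseteq> \<tau> \<and> e \<notin> Z \<and> (\<forall>t'\<in>D'. e \<subseteq> t' \<longrightarrow> t' = \<tau>)"
      proof
        fix \<tau> assume "\<tau> \<in> R"
        then obtain g where g: "g \<in> carrier G" "\<tau> = \<phi> g ` t" unfolding R_def orb_def by blast
        have eV: "e \<subseteq> V" using SV[OF t] e(2) by blast
        have c1: "card (\<phi> g ` e) = 2" using ga_card[OF ga eV g(1)] e(1) by simp
        have c2: "\<phi> g ` e \<subseteq> \<tau>" using g(2) e(2) by blast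
        have c3: "\<phi> g ` e \<notin> Z"
        proof
          assume "\<phi> g ` e \<in> Z"
          then have "\<phi> (inv\<^bsub>G\<^esub> g) ` \<phi> g ` e \<in> Z" using Zinv g(1) by simp
          then show False using ga_inv(1)[OF grp ga eV g(1)] e(3) by simp
        qed
        have c4: "t' = \<tau>" if "t' \<in> D'" "\<phi> g ` e \<subseteq> t'" for t'
        proof -
          have t'S: "t' \<in> S" using that(1) D'S by blast
          have "\<phi> (inv\<^bsub>G\<^esub> g) ` t' \<in> S" using S_inv[OF _ t'S] g(1) by simp
          moreover have "e \<subseteq> \<phi> (inv\<^bsub>G\<^esub> g) ` t'"
            using image_mono[OF that(2), of "\<phi> (inv\<^bsub>G\<^esub> g)"] ga_inv(1)[OF grp ga eV g(1)] by simp
          ultimately have "\<phi> (inv\<^bsub>G\<^esub> g) ` t' = t" using free by blast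
          then have "\<phi> g ` \<phi> (inv\<^bsub>G\<^esub> g) ` t' = \<phi> g ` t" by simp
          then show ?thesis using ga_inv(2)[OF grp ga SV[OF t'S] g(1)] g(2) by simp
        qed
        show "\<exists>e. card e = 2 \<and> e \<subseteq> \<tau> \<and> e \<notin> Z \<and> (\<forall>t'\<in>D'. e \<subseteq> t' \<longrightarrow> t' = \<tau>)"
          using c1 c2 c3 c4 by blast
      qed
      have zu: "zsteps Z [u]" by (simp add: zsteps_def)
      have E: "edge_equiv (KD Z X (D' - R)) p [u]"
        using remove_iter[OF Xc ZX Zc fR pne zp _ zu RD D'(3) Rfree D'(4)] by simp
      have "D' - R \<subseteq> \<Union>Q'"
      proof
        fix x assume x: "x \<in> D' - R"
        then have "x \<in> S" using D'S by blast
        then obtain B where B: "B \<in> Q" "x \<in> B" using S_def by blast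
        have "B \<noteq> orb G \<phi> t" using x B(2) R_def by blast
        then show "x \<in> \<Union>Q'" using B Q'_def by blast
      qed
      moreover have "Q' \<subseteq> Ob" using QOb Q'_def by blast
      ultimately show ?thesis unfolding F_def using E D'(1,3) by blast
    qed
    ultimately show False using Qmin by (meson not_le)
  qed

  define W where "W = Z \<union> S \<union> {\<sigma>. \<exists>t\<in>S. \<sigma> \<subseteq> t \<and> \<sigma> \<noteq> {}}"
  have ZW: "Z \<subseteq> W" unfolding W_def by blast
  have SW: "S \<subseteq> W" unfolding W_def by blast
  have finS: "finite t" if "t \<in> S" for t using S3(2)[OF that] by (metis card.infinite zero_neq_numeral)
  have WX: "W \<subseteq> X"
    unfolding W_def using ZX S3(1) sc_sub[OF Xc] by blast
  have Wc: "simplicial_complex W"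
    unfolding simplicial_complex_def
  proof (rule conjI; intro ballI allI impI)
    fix \<sigma> assume "\<sigma> \<in> W"
    then consider "\<sigma> \<in> Z" | "\<sigma> \<in> S" | t where "t \<in> S" "\<sigma> \<subseteq> t" "\<sigma> \<noteq> {}" unfolding W_def by blast
    then show "finite \<sigma> \<and> \<sigma> \<noteq> {}"
    proof cases
      case 1 then show ?thesis using Zc unfolding simplicial_complex_def by blast
    next
      case 2 then show ?thesis using finS S3(2) by fastforce
    next
      case 3 then show ?thesis using finS finite_subset by blast
    qed
  next
    fix \<sigma> \<tau> assume s: "\<sigma> \<in> W" and st: "\<tau> \<subseteq> \<sigma> \<and> \<tau> \<noteq> {}"
    from s consider "\<sigma> \<in> Z" | "\<sigma> \<in> S" | t where "t \<in> S" "\<sigma> \<subseteq> t" "\<sigma> \<noteq> {}" unfolding W_def by blast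
    then show "\<tau> \<in> W"
    proof cases
      case 1 then show ?thesis using sc_sub[OF Zc 1] st unfolding W_def by blast
    next
      case 2 then show ?thesis using st unfolding W_def by blast
    next
      case 3 then show ?thesis using st unfolding W_def by blast
    qed
  qed
  have Winv: "\<phi> g ` \<sigma> \<in> W" if g: "g \<in> carrier G" and s: "\<sigma> \<in> W" for g \<sigma>
  proof -
    from s consider "\<sigma> \<in> Z" | "\<sigma> \<in> S" | t where "t \<in> S" "\<sigma> \<subseteq> t" "\<sigma> \<noteq> {}" unfolding W_def by blast
    then show ?thesis
    proof cases
      case 1 then show ?thesis using Zinv[OF g 1] unfolding W_def by blast
    next
      case 2 then show ?thesis using S_inv[OF g 2] unfolding W_def by blast
    next
      case 3
      have "\<phi> g ` \<sigma> \<subseteq> \<phi> g ` t" using 3 by blast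
      moreover have "\<phi> g ` \<sigma> \<noteq> {}" using 3 by blast
      ultimately show ?thesis using S_inv[OF g 3(1)] unfolding W_def by blast
    qed
  qed
  have Wfin: "finite {orb G \<phi> \<sigma> | \<sigma>. \<sigma> \<in> W}"
  proof -
    have "{orb G \<phi> \<sigma> | \<sigma>. \<sigma> \<in> W} \<subseteq> {orb G \<phi> \<sigma> | \<sigma>. \<sigma> \<in> Z} \<union> Q \<union> (\<Union>d\<in>D0. orb G \<phi> ` Pow d)"
    proof
      fix B assume "B \<in> {orb G \<phi> \<sigma> | \<sigma>. \<sigma> \<in> W}"
      then obtain \<sigma> where B: "B = orb G \<phi> \<sigma>" "\<sigma> \<in> W" by blast
      from B(2) consider "\<sigma> \<in> Z" | "\<sigma> \<in> S" | t where "t \<in> S" "\<sigma> \<subseteq> t" "\<sigma> \<noteq> {}" unfolding W_def by blast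
      then show "B \<in> {orb G \<phi> \<sigma> | \<sigma>. \<sigma> \<in> Z} \<union> Q \<union> (\<Union>d\<in>D0. orb G \<phi> ` Pow d)"
      proof cases
        case 1 then show ?thesis using B by blast
      next
        case 2 then show ?thesis using B S_orb by blast
      next
        case 3
        obtain d g where dg: "d \<in> D0" "g \<in> carrier G" "t = \<phi> g ` d" using S_rep[OF 3(1)] by blast
        have dV: "d \<subseteq> V" using TXV D0(2) dg(1) by blast
        have sV: "\<sigma> \<subseteq> V" using SV[OF 3(1)] 3(2) by blast
        define \<sigma>0 where "\<sigma>0 = \<phi> (inv\<^bsub>G\<^esub> g) ` \<sigma>"
        have "\<sigma>0 \<subseteq> \<phi> (inv\<^bsub>G\<^esub> g) ` t" using 3(2) \<sigma>0_def by blast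
        then have s0d: "\<sigma>0 \<subseteq> d" using ga_inv(1)[OF grp ga dV dg(2)] dg(3) by simp
        have "\<phi> g ` \<sigma>0 = \<sigma>" using ga_inv(2)[OF grp ga sV dg(2)] \<sigma>0_def by simp
        then have "orb G \<phi> \<sigma> = orb G \<phi> \<sigma>0" using orb_img[OF grp ga _ dg(2), of \<sigma>0] s0d dV by auto
        then show ?thesis using B s0d dg(1) by blast
      qed
    qed
    moreover have "finite (\<Union>d\<in>D0. orb G \<phi> ` Pow d)"
    proof (rule finite_UN_I[OF D0(1)])
      fix d assume "d \<in> D0"
      then have "card d = 3" using D0(2) unfolding TX_def by blast
      then have "finite d" by (metis card.infinite zero_neq_numeral)
      then show "finite (orb G \<phi> ` Pow d)" by simp
    qed
    ultimately show ?thesis using Zfin finQ by (meson finite_Un finite_subset)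
  qed
  have Gcs: "G_cs G \<phi> X W"
    unfolding G_cs_def subcomplex_def
    using WX Wc Winv Wfin by (simp add: orb_def)
  have Zd: "dim_le2 Z" "\<forall>e\<in>edges Z. degree Z e \<ge> 2" "\<forall>v\<in>vertices Z. \<exists>e\<in>edges Z. v \<in> e"
    using Zess unfolding essential_def by auto
  have edgesZW: "edges Z \<subseteq> edges W" using ZW unfolding edges_def by blast
  have Wess: "essential W"
    unfolding essential_def
  proof (intro conjI ballI)
    show "dim_le2 W" unfolding dim_le2_def
    proof
      fix \<sigma> assume "\<sigma> \<in> W"
      then consider "\<sigma> \<in> Z" | "\<sigma> \<in> S" | t where "t \<in> S" "\<sigma> \<subseteq> t" "\<sigma> \<noteq> {}" unfolding W_def by blast
      then show "card \<sigma> \<le> 3"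
      proof cases
        case 1 then show ?thesis using Zd(1) unfolding dim_le2_def by blast
      next
        case 2 then show ?thesis using S3(2) by simp
      next
        case 3 then show ?thesis using card_mono[OF finS[OF 3(1)] 3(2)] S3(2)[OF 3(1)] by simp
      qed
    qed
  next
    fix e assume eW: "e \<in> edges W"
    then have e: "e \<in> W" "card e = 2" unfolding edges_def by auto
    show "degree W e \<ge> 2"
    proof (cases "e \<in> Z")
      case True
      then have "degree Z e \<ge> 2" using Zd(2) e unfolding edges_def by blast
      then show ?thesis using deg_mono[OF ZW, of e] by (meson order_trans)
    next
      case False
      have "e \<notin> S" using e(2) S3(2) by force
      then obtain t where t: "t \<in> S" "e \<subseteq> t" using e(1) False unfolding W_def by blast
      obtain t' where t': "t' \<in> S" "t' \<noteq> t" "e \<subseteq> t'" using nonfree[OF t(1) e(2) t(2) False] by blast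
      have "t \<in> triangles_at W e" "t' \<in> triangles_at W e"
        using t t' SW S3(2) unfolding triangles_at_def by auto
      then show ?thesis using deg_ge2 t'(2) by metis
    qed
  next
    fix v assume "v \<in> vertices W"
    then obtain \<sigma> where s: "\<sigma> \<in> W" "v \<in> \<sigma>" unfolding vertices_def by blast
    then consider "\<sigma> \<in> Z" | t where "t \<in> S" "\<sigma> \<subseteq> t" unfolding W_def by blast
    then show "\<exists>e\<in>edges W. v \<in> e"
    proof cases
      case 1
      then have "v \<in> vertices Z" using s unfolding vertices_def by blast
      then show ?thesis using Zd(3) edgesZW by blast
    next
      case 2
      have vt: "v \<in> t" using 2 s by blast
      have "card (t - {v}) = 2" using S3(2)[OF 2(1)] vt finS[OF 2(1)] by simp
      then obtain w where w: "w \<in> t" "w \<noteq> v" by (metis Diff_iff card_2_iff insertI1 singletonD)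
      have "{v, w} \<in> W" using 2(1) vt w unfolding W_def by blast
      moreover have "card {v, w} = 2" using w(2) by simp
      ultimately show ?thesis unfolding edges_def by blast
    qed
  qed
  have thickW: "\<exists>e\<in>edges W. degree W e \<ge> 3"
  proof (rule ccontr)
    assume nt: "\<not> (\<exists>e\<in>edges W. degree W e \<ge> 3)"
    have pair: "{x, y} \<notin> Z" if T: "T \<in> S" "x \<in> T" "y \<in> T" "x \<noteq> y" for T x y
    proof
      assume xy: "{x, y} \<in> Z"
      have c2: "card {x, y} = 2" using T(4) by simp
      then have "{x, y} \<in> edges W" using xy ZW unfolding edges_def by blast
      moreover have "degree Z {x, y} \<ge> 2" using Zd(2) xy c2 unfolding edges_def by blast
      moreover have "T \<in> triangles_at W {x, y}" using T SW S3(2) unfolding triangles_at_def by auto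
      ultimately show False using deg_ge3[OF _ ZW _ S3(3)[OF T(1)]] nt by blast
    qed
    have hyp: "{a, b} \<notin> Z \<and> {b, c} \<notin> Z \<and> {a, c} \<notin> Z"
      if T: "{a, b, c} \<in> KD Z X D'" "card {a, b, c} = 3" "{a, b, c} \<notin> Z" for a b c
    proof -
      have "{a, b, c} \<in> D'" using T unfolding KD_def by auto
      then have TS: "{a, b, c} \<in> S" using D'S by blast
      have d: "a \<noteq> b" "b \<noteq> c" "a \<noteq> c" using T(2) by (auto simp: card_insert_if split: if_splits)
      show ?thesis using pair[OF TS] d by simp
    qed
    have "edge_equiv Z p [u]"
      by (rule wedge_apply[OF Zc Zconn hyp pne zp lastZ uZ D'(4)])
    then show False using p(4) u_def by simp
  qed
  show ?thesis using Gcs Wess thickW ZW unfolding thick_def by blast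
qed

end
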